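(* Let $k\ge2$, $K\ge1$ be integers, let $R\ge k$ be an integer and $L$ a positive integer divisible by $R^{K-1}$. For $A$ dividing $L$ let $f_A=(\mathsf{1}^A\mathsf{2}^A\cdots\mathsf{k}^A)^{L/A}\in[k]^{kL}$, and for a word $w$ over $[K]$ let $\hat w$ be the word over $[k]$ obtained by replacing each symbol $l\in[K]$ of $w$ by $f_{R^{l-1}}$. Let $w_1,w_2$ be words over $[K]$ and let $s=(w_1',w_2')$ be any common subsequence between $\hat w_1$ and $\hat w_2$. Then \[\operatorname{span} s\ \ge\ \left(k+1-\frac kR-\frac{8R^{K-1}}{L}\right)\operatorname{len} s-2Lk(k+1)\cdot\mathrm{LCS}(w_1,w_2)-16R^{K-1}.\]
   Context: $\alpha^A$ denotes letter $\alpha$ repeated $A$ times, and $u^m$ denotes $m$ concatenated copies of the word $u$. Symbols are distinguishable positions. A common subsequence of words $u_1,u_2$ is a pair $(u_1',u_2')$ of subsequences of $u_1,u_2$ that are equal as words; $\operatorname{len}$ is their common length; $\mathrm{LCS}(u_1,u_2)$ is the maximum length of a common subsequence. The span of a subsequence $u'$ in $u$ is the length of the shortest block of consecutive symbols of $u$ containing $u'$, and $\operatorname{span}(u_1',u_2')=\operatorname{span}_{u_1}u_1'+\operatorname{span}_{u_2}u_2'$. *)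

theory Defs
  imports Complex_Main
begin

text \<open>Words are lists of natural numbers; the alphabet [k] is {1..k}.
A subsequence of a word u is represented by the set of positions it uses
(symbols are distinguishable positions), a subset of {..<length u}.\<close>

definition is_subseq_pos :: "nat list \<Rightarrow> nat set \<Rightarrow> bool" where
  "is_subseq_pos u I \<longleftrightarrow> I \<subseteq> {..<length u}"

definition is_common_subseq :: "nat list \<Rightarrow> nat list \<Rightarrow> nat set \<Rightarrow> nat set \<Rightarrow> bool" where
  "is_common_subseq u1 u2 I1 I2 \<longleftrightarrow>
     is_subseq_pos u1 I1 \<and> is_subseq_pos u2 I2 \<and> nths u1 I1 = nths u2 I2"

definition cs_len :: "nat list \<Rightarrow> nat set \<Rightarrow> nat" where
  "cs_len u1 I1 = length (nths u1 I1)"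

definition span_pos :: "nat set \<Rightarrow> nat" where
  "span_pos I = (if I = {} then 0 else Max I - Min I + 1)"

definition cs_span :: "nat set \<Rightarrow> nat set \<Rightarrow> nat" where
  "cs_span I1 I2 = span_pos I1 + span_pos I2"

definition LCS :: "nat list \<Rightarrow> nat list \<Rightarrow> nat" where
  "LCS u1 u2 = Max {length (nths u1 I1) | I1 I2. is_common_subseq u1 u2 I1 I2}"

definition fblock :: "nat \<Rightarrow> nat \<Rightarrow> nat \<Rightarrow> nat list" where
  "fblock k L A = concat (replicate (L div A) (concat (map (\<lambda>c. replicate A c) [1..<k+1])))"

definition hat :: "nat \<Rightarrow> nat \<Rightarrow> nat \<Rightarrow> nat list \<Rightarrow> nat list" where
  "hat k L R w = concat (map (\<lambda>l. fblock k L (R ^ (l - 1))) w)"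

end

theory Submission imports Defs begin


lemma nth_concat_const:
  assumes "\<forall>x\<in>set w. length (g x) = c" "p < c * length w"
  shows "concat (map g w) ! p = g (w ! (p div c)) ! (p mod c)"
  using assms
proof (induction w arbitrary: p)
  case Nil then show ?case by simp
next
  case (Cons a w)
  have la: "length (g a) = c" using Cons.prems by simp
  show ?case
  proof (cases "p < c")
    case True then show ?thesis using la by (simp add: nth_append)
  next
    case False
    then have c0: "c > 0" using Cons.prems by (cases c) auto
    have "p - c < c * length w" using Cons.prems False by auto
    then have IH: "concat (map g w) ! (p - c) = g (w ! ((p-c) div c)) ! ((p-c) mod c)"
      using Cons by simp
    have d: "p div c = Suc ((p - c) div c)" using False c0
      by (subst div_if) auto
    have m: "p mod c = (p - c) mod c" using False by (simp add: mod_if)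
    show ?thesis using False la IH d m by (simp add: nth_append)
  qed
qed

lemma length_concat_const:
  assumes "\<forall>x\<in>set w. length (g x) = c"
  shows "length (concat (map g w)) = c * length w"
  using assms by (induction w) auto

lemma nth_concat_replicate:
  assumes "length xs = c" "p < m * c"
  shows "concat (replicate m xs) ! p = xs ! (p mod c)"
proof -
  have "concat (replicate m xs) = concat (map (\<lambda>_. xs) (replicate m (0::nat)))"
    by (simp add: map_replicate_const)
  also have "\<dots> ! p = xs ! (p mod c)"
    using nth_concat_const[of "replicate m (0::nat)" "\<lambda>_. xs" c p] assms
    by (simp add: mult.commute)
  finally show ?thesis .
qed

lemma base_nth:
  assumes "j < m * A"
  shows "concat (map (\<lambda>c. replicate A c) [a..<a+m]) ! j = a + j div A"
proof -
  have "concat (map (\<lambda>c. replicate A c) [a..<a+m]) ! j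
      = replicate A ([a..<a+m] ! (j div A)) ! (j mod A)"
    using nth_concat_const[of "[a..<a+m]" "\<lambda>c. replicate A c" A j] assms
    by (simp add: mult.commute)
  moreover have "A > 0" using assms by (cases A) auto
  moreover have "j div A < m" using assms
    by (metis div_less_iff_less_mult mult.commute \<open>A>0\<close> )
  ultimately show ?thesis by simp
qed

lemma length_concat_replicate: "length (concat (replicate m xs)) = m * length xs"
  by (induction m) auto

lemma fblock_length:
  assumes "A dvd L" "A > 0"
  shows "length (fblock k L A) = k * L"
proof -
  have a: "length (concat (map (\<lambda>c. replicate A c) [1..<k+1])) = A * k"
    by (subst length_concat_const[where c=A]) auto
  have "length (fblock k L A) = L div A * length (concat (map (\<lambda>c. replicate A c) [1..<k+1]))"
    unfolding fblock_def by (rule length_concat_replicate)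
  also have "\<dots> = L div A * (A * k)" using a by simp
  also have "\<dots> = k * L" using assms
    by (metis dvd_mult_div_cancel mult.commute mult.left_commute)
  finally show ?thesis .
qed

lemma fblock_nth:
  assumes "A dvd L" "A > 0" "j < k * L"
  shows "fblock k L A ! j = (j div A) mod k + 1"
proof -
  let ?b = "concat (map (\<lambda>c. replicate A c) [1..<1+k])"
  have lb: "length ?b = k * A"
    by (subst length_concat_const[where c=A]) auto
  have LA: "L div A * (k * A) = k * L" using assms
    by (metis dvd_mult_div_cancel mult.commute mult.left_commute)
  have "fblock k L A ! j = ?b ! (j mod (k*A))"
    unfolding fblock_def using nth_concat_replicate[OF lb, of j "L div A"] assms LA
    by (simp add: add.commute)
  also have "\<dots> = 1 + (j mod (k*A)) div A"
    using base_nth[of "j mod (k*A)" k A 1] assms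
    by (metis mod_less_divisor mult_pos_pos neq0_conv  mult_zero_left  le_less_trans zero_le LA less_nat_zero_code mult.commute)
  also have "(j mod (k*A)) div A = (j div A) mod k"
    using \<open>A>0\<close> by (simp add: mod_mult2_eq mult.commute)
  finally show ?thesis by simp
qed




lemma nths_conv: "nths xs I = map ((!) xs) (filter (\<lambda>i. i \<in> I) [0..<length xs])"
proof (induction xs rule: rev_induct)
  case Nil then show ?case by simp
next
  case (snoc x xs)
  have "map ((!) (xs @ [x])) (filter (\<lambda>i. i \<in> I) [0..<length xs])
      = map ((!) xs) (filter (\<lambda>i. i \<in> I) [0..<length xs])"
    by (rule map_cong) (auto simp: nth_append)
  then show ?case using snoc by (simp add: nths_append)
qed

lemma mod_div_mod:
  fixes p k L A :: nat
  assumes "A dvd L" "A > 0"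
  shows "(p mod (k*L)) div A mod k = p div A mod k"
proof -
  obtain M where M: "L = A * M" using assms by (auto elim: dvdE)
  have "p div A = (p div (k*L)) * (k*M) + (p mod (k*L)) div A"
  proof -
    have "p = (k*L) * (p div (k*L)) + p mod (k*L)" by simp
    also have "(k*L) * (p div (k*L)) = A * ((p div (k*L)) * (k*M))" using M by simp
    finally have "p = A * ((p div (k*L)) * (k*M)) + p mod (k*L)" .
    then have "p div A = (A * ((p div (k*L)) * (k*M)) + p mod (k*L)) div A" by simp
    also have "\<dots> = (p div (k*L)) * (k*M) + (p mod (k*L)) div A" using assms by simp
    finally show ?thesis .
  qed
  then have "p div A = k * ((p div (k*L)) * M) + (p mod (k*L)) div A" by (simp add: ac_simps)
  then show ?thesis by simp
qed

definition lev :: "nat \<Rightarrow> nat \<Rightarrow> nat \<Rightarrow> nat list \<Rightarrow> nat \<Rightarrow> nat" where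
  "lev k L R w p = R ^ (w ! (p div (k*L)) - 1)"

lemma hat_length:
  assumes "R > 0" "R^(K-1) dvd L" "set w \<subseteq> {1..K}"
  shows "length (hat k L R w) = k*L*length w"
proof -
  have "\<forall>l\<in>set w. length (fblock k L (R^(l-1))) = k*L"
  proof
    fix l assume "l \<in> set w"
    then have "l \<le> K" using assms by auto
    then have "l - 1 \<le> K - 1" by simp
    then have "R^(l-1) dvd R^(K-1)" by (simp add: le_imp_power_dvd)
    then have "R^(l-1) dvd L" using assms dvd_trans by blast
    then show "length (fblock k L (R^(l-1))) = k*L" using fblock_length assms by simp
  qed
  then show ?thesis unfolding hat_def by (simp add: length_concat_const)
qed

lemma lev_dvd:
  assumes "R > 0" "R^(K-1) dvd L" "set w \<subseteq> {1..K}" "p < k*L*length w"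
  shows "lev k L R w p dvd L" "lev k L R w p > 0" "lev k L R w p \<le> R^(K-1)"
    "w ! (p div (k*L)) \<in> {1..K}"
proof -
  have kL: "k*L > 0" using assms by (cases "k*L") auto
  have "p div (k*L) < length w" using assms kL
    by (simp add: div_less_iff_less_mult mult.commute)
  then show wi: "w ! (p div (k*L)) \<in> {1..K}" using assms nth_mem by blast
  then have "w ! (p div (k*L)) - 1 \<le> K - 1" by auto
  then have d: "lev k L R w p dvd R^(K-1)" unfolding lev_def by (simp add: le_imp_power_dvd)
  then show "lev k L R w p dvd L" using assms dvd_trans by blast
  show "lev k L R w p > 0" using assms unfolding lev_def by simp
  show "lev k L R w p \<le> R^(K-1)" using d assms by (simp add: dvd_imp_le)
qed

lemma hat_nth:
  assumes "R > 0" "R^(K-1) dvd L" "set w \<subseteq> {1..K}" "p < k*L*length w"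
  shows "hat k L R w ! p = p div (lev k L R w p) mod k + 1"
proof -
  have kL: "k*L > 0" using assms by (cases "k*L") auto
  have len: "\<forall>l\<in>set w. length (fblock k L (R^(l-1))) = k*L"
  proof
    fix l assume "l \<in> set w"
    then have "l \<le> K" using assms by auto
    then have "l - 1 \<le> K - 1" by simp
    then have "R^(l-1) dvd R^(K-1)" by (simp add: le_imp_power_dvd)
    then have "R^(l-1) dvd L" using assms dvd_trans by blast
    then show "length (fblock k L (R^(l-1))) = k*L" using fblock_length assms by simp
  qed
  have "hat k L R w ! p = fblock k L (lev k L R w p) ! (p mod (k*L))"
    unfolding hat_def lev_def using nth_concat_const[OF len] assms by (simp add: mult.commute)
  also have "\<dots> = (p mod (k*L)) div (lev k L R w p) mod k + 1"
    using fblock_nth lev_dvd[OF assms] kL by simp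
  also have "\<dots> = p div (lev k L R w p) mod k + 1"
    using mod_div_mod lev_dvd[OF assms] by simp
  finally show ?thesis .
qed




lemma local_step:
  fixes k R A B p q p' q' :: nat
  assumes k2: "k \<ge> 2" and Rk: "R \<ge> k" and A0: "A > 0" and RAB: "R*A \<le> B"
    and pp: "p < p'" and qq: "q < q'"
    and l1: "p div A mod k = q div B mod k" and l2: "p' div A mod k = q' div B mod k"
  shows "real (p'-p) + real (q'-q) \<ge> (real k + 1 - real k / real R)
          + (real k / real R) * (real (q' mod B) - real (q mod B))
          - (real k - 1) * (real (p' mod A) - real (p mod A))"
proof -
  have R0: "R > 0" using k2 Rk by simp
  have B0: "B > 0" using RAB A0 R0 by (metis mult_pos_pos order.strict_trans2)
  define a where "a = p div A" define a' where "a' = p' div A"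
  define \<alpha> where "\<alpha> = p mod A" define \<alpha>' where "\<alpha>' = p' mod A"
  define b where "b = q div B" define b' where "b' = q' div B"
  define \<beta> where "\<beta> = q mod B" define \<beta>' where "\<beta>' = q' mod B"
  have pe: "p = A*a + \<alpha>" "p' = A*a' + \<alpha>'" unfolding a_def \<alpha>_def a'_def \<alpha>'_def by simp_all
  have qe: "q = B*b + \<beta>" "q' = B*b' + \<beta>'" unfolding b_def \<beta>_def b'_def \<beta>'_def by simp_all
  have \<alpha>A: "\<alpha> < A" "\<alpha>' < A" unfolding \<alpha>_def \<alpha>'_def using A0 by simp_all
  have \<beta>B: "\<beta> < B" "\<beta>' < B" unfolding \<beta>_def \<beta>'_def using B0 by simp_all
  have aa: "a \<le> a'" unfolding a_def a'_def using pp by (simp add: div_le_mono)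
  have bb: "b \<le> b'" unfolding b_def b'_def using qq by (simp add: div_le_mono)
  define x where "x = real k / real R"
  have x0: "0 \<le> x" "x \<le> 1" unfolding x_def using Rk R0 by auto
  have xB: "x * real B \<ge> real k * real A"
  proof -
    have "real k * real A * real R \<le> real k * real B" using RAB
      by (metis mult.assoc mult.commute of_nat_mono of_nat_mult mult_le_mono2)
    then show ?thesis unfolding x_def using R0 by (simp add: field_simps)
  qed
  have dp: "real (p'-p) = real A * (real a' - real a) + real \<alpha>' - real \<alpha>"
    using pp pe by (simp add: of_nat_diff algebra_simps)
  have dq: "real (q'-q) = real B * (real b' - real b) + real \<beta>' - real \<beta>"
    using qq qe by (simp add: of_nat_diff algebra_simps)
  have goal: "real (p'-p) + real (q'-q) \<ge> (real k + 1 - x)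
          + x * (real \<beta>' - real \<beta>) - (real k - 1) * (real \<alpha>' - real \<alpha>)"
  proof (cases "b' = b")
    case True
    then have bq: "\<beta> < \<beta>'" using qq qe by simp
    have "a mod k = a' mod k" using l1 l2 True unfolding a_def a'_def b_def b'_def by simp
    show ?thesis
    proof (cases "a' = a")
      case True
      then have d: "\<alpha> < \<alpha>'" using pp pe by simp
      have "real (p'-p) = real \<alpha>' - real \<alpha>" using dp True by simp
      moreover have "real (q'-q) = real \<beta>' - real \<beta>" using dq \<open>b'=b\<close> by simp
      moreover have "(1 - x) * (real \<beta>' - real \<beta> - 1) \<ge> 0" using x0 bq by simp
      moreover have "real k * (real \<alpha>' - real \<alpha> - 1) \<ge> 0" using d by simp
      ultimately show ?thesis by (simp add: algebra_simps)
    next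
      case False
      then have "a < a'" using aa by simp
      have "a' \<ge> a + k"
      proof (rule ccontr)
        assume "\<not> a' \<ge> a + k"
        then have "a' - a < k" "a' - a > 0" using \<open>a<a'\<close> by auto
        moreover have "(a' - a) mod k = 0" using \<open>a mod k = a' mod k\<close> \<open>a<a'\<close>
          mod_eq_dvd_iff_nat[of a a' k] by simp
        ultimately show False by simp
      qed
      then have "real a' - real a \<ge> real k" by simp
      then have "real A * (real a' - real a) \<ge> real A * real k" using A0 by simp
      moreover have "real (q'-q) = real \<beta>' - real \<beta>" using dq \<open>b'=b\<close> by simp
      moreover have "(1 - x) * (real \<beta>' - real \<beta> - 1) \<ge> 0" using x0 bq by simp
      moreover have "real k * (real A + real \<alpha>' - real \<alpha> - 1) \<ge> 0" using \<alpha>A by simp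
      ultimately show ?thesis using dp by (simp add: algebra_simps)
    qed
  next
    case False
    then have "real b' - real b \<ge> 1" using bb by simp
    then have "real B * (real b' - real b) \<ge> real B" using B0 by simp
    then have q1: "real (q'-q) \<ge> real B + real \<beta>' - real \<beta>" using dq by simp
    have p1: "real (p'-p) \<ge> 1" using pp by simp
    have e: "real \<beta>' - real \<beta> \<ge> - (real B - 1)" using \<beta>B by simp
    have "(1 - x) * (real \<beta>' - real \<beta>) \<ge> (1 - x) * (- (real B - 1))"
      using e x0 by (simp add: mult_left_mono)
    moreover have "(real k - 1) * (real \<alpha>' - real \<alpha>) \<ge> (real k - 1) * (- (real A - 1))"
      using \<alpha>A k2 by (intro mult_left_mono) auto
    ultimately show ?thesis using q1 p1 xB by (simp add: algebra_simps)
  qed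
  then show ?thesis unfolding x_def \<alpha>_def \<alpha>'_def \<beta>_def \<beta>'_def .
qed

lemma local_step_sym:
  fixes k R A B p q p' q' :: nat
  assumes k2: "k \<ge> 2" and Rk: "R \<ge> k" and B0: "B > 0" and RAB: "R*B \<le> A"
    and pp: "p < p'" and qq: "q < q'"
    and l1: "p div A mod k = q div B mod k" and l2: "p' div A mod k = q' div B mod k"
  shows "real (p'-p) + real (q'-q) \<ge> (real k + 1 - real k / real R)
          + (real k / real R) * (real (p' mod A) - real (p mod A))
          - (real k - 1) * (real (q' mod B) - real (q mod B))"
  using local_step[OF k2 Rk B0 RAB qq pp] l1 l2 by simp




lemma real_divmod: "real (n::nat) = real \<kappa> * real (n div \<kappa>) + real (n mod \<kappa>)"
proof -
  have "n = \<kappa> * (n div \<kappa>) + n mod \<kappa>" by simp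
  then have "real n = real (\<kappa> * (n div \<kappa>) + n mod \<kappa>)" by (rule arg_cong)
  then show ?thesis by (simp only: of_nat_add of_nat_mult)
qed

lemma ord_helper:
  fixes R a b :: nat
  assumes "R > 0" "a < b" "a = b \<or> R*a \<le> b \<or> R*b \<le> a"
  shows "R*a \<le> b"
proof -
  have "b \<le> R*b" using assms(1) by simp
  then show ?thesis using assms by linarith
qed

lemma main_abstract:
  fixes k R T \<kappa> m :: nat and p q A B :: "nat \<Rightarrow> nat"
  assumes k2: "k \<ge> 2" and Rk: "R \<ge> k" and \<kappa>0: "\<kappa> > 0"
    and inc: "\<And>i. i < m \<Longrightarrow> p i < p (Suc i) \<and> q i < q (Suc i)"
    and let_: "\<And>i. i \<le> m \<Longrightarrow> p i div A i mod k = q i div B i mod k"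
    and blkA: "\<And>i. i < m \<Longrightarrow> p i div \<kappa> = p (Suc i) div \<kappa> \<Longrightarrow> A (Suc i) = A i"
    and blkB: "\<And>i. i < m \<Longrightarrow> q i div \<kappa> = q (Suc i) div \<kappa> \<Longrightarrow> B (Suc i) = B i"
    and levs: "\<And>i. i \<le> m \<Longrightarrow> A i > 0 \<and> B i > 0 \<and> A i \<le> T \<and> B i \<le> T
                 \<and> (A i = B i \<or> R * A i \<le> B i \<or> R * B i \<le> A i)"
  shows "(real \<kappa> + real k + 1 + 2 * real T) *
           (real (p m - p 0) + real (q m - q 0))
         \<ge> real \<kappa> * (real k + 1 - real k / real R) * (real (card {i. i \<le> m \<and> A i \<noteq> B i}) - 1)
           - 2 * real \<kappa> * real T - 2 * (real k + 1 + 2 * real T) * (real \<kappa> - 1)"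
proof -
  define x where "x = real k / real R"
  define \<rho> where "\<rho> = real k + 1 - x"
  define C where "C = real k + 1 + 2 * real T"
  have R0: "R > 0" using k2 Rk by simp
  have x0: "0 \<le> x" "x \<le> 1" unfolding x_def using Rk R0 by auto
  have \<rho>0: "0 \<le> \<rho>" "\<rho> \<le> real k + 1" unfolding \<rho>_def using x0 by auto
  define \<chi> where "\<chi> i = (of_bool (A i \<noteq> B i) :: real)" for i
  define \<Phi> where "\<Phi> i = (if A i < B i then x * real (q i mod B i) - (real k - 1) * real (p i mod A i)
     else if B i < A i then x * real (p i mod A i) - (real k - 1) * real (q i mod B i) else 0)" for i
  define o1 where "o1 i = real (p i mod \<kappa>)" for i
  define o2 where "o2 i = real (q i mod \<kappa>)" for i
  define E where "E i = real (p (Suc i) - p i) + real (q (Suc i) - q i)" for i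
  have \<Phi>b: "\<bar>\<Phi> i\<bar> \<le> real T" if "i \<le> m" for i
  proof -
    have l: "A i > 0" "B i > 0" "A i \<le> T" "B i \<le> T" using levs[OF that] by auto
    have rr: "real (k - 1) \<le> real R" using Rk by simp
    have km: "real k - 1 = real (k-1)" using k2 by simp
    show ?thesis
    proof (cases "A i < B i")
      case True
      then have RAB: "R * A i \<le> B i" using levs[OF that] R0 ord_helper by blast
      have a1: "real (p i mod A i) \<le> real (A i)" using l by (simp add: less_imp_le)
      have "(real k - 1) * real (p i mod A i) \<le> real (k-1) * real (A i)"
        using a1 km by (metis mult_left_mono of_nat_0_le_iff)
      also have "\<dots> \<le> real R * real (A i)" using rr by (simp add: mult_right_mono)
      also have "\<dots> \<le> real T" using RAB l by (metis le_trans of_nat_mono of_nat_mult)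
      finally have u: "(real k - 1) * real (p i mod A i) \<le> real T" .
      have "x * real (q i mod B i) \<le> 1 * real (B i)"
        using x0 l by (intro mult_mono) (auto simp: less_imp_le)
      then have v: "x * real (q i mod B i) \<le> real T" using l by simp
      have "0 \<le> (real k - 1) * real (p i mod A i)" using k2 by simp
      moreover have "0 \<le> x * real (q i mod B i)" using x0 by simp
      ultimately show ?thesis using u v True unfolding \<Phi>_def by auto
    next
      case False
      show ?thesis
      proof (cases "B i < A i")
        case True
        then have RAB: "R * B i \<le> A i" using levs[OF that] R0 ord_helper[of R "B i" "A i"] by auto
        have a1: "real (q i mod B i) \<le> real (B i)" using l by (simp add: less_imp_le)
        have "(real k - 1) * real (q i mod B i) \<le> real (k-1) * real (B i)"
          using a1 km by (metis mult_left_mono of_nat_0_le_iff)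
        also have "\<dots> \<le> real R * real (B i)" using rr by (simp add: mult_right_mono)
        also have "\<dots> \<le> real T" using RAB l by (metis le_trans of_nat_mono of_nat_mult)
        finally have u: "(real k - 1) * real (q i mod B i) \<le> real T" .
        have "x * real (p i mod A i) \<le> 1 * real (A i)"
          using x0 l by (intro mult_mono) (auto simp: less_imp_le)
        then have v: "x * real (p i mod A i) \<le> real T" using l by simp
        have "0 \<le> (real k - 1) * real (q i mod B i)" using k2 by simp
        moreover have "0 \<le> x * real (p i mod A i)" using x0 by simp
        ultimately show ?thesis using u v True False unfolding \<Phi>_def by auto
      next
        case False2: False
        then show ?thesis using False unfolding \<Phi>_def by simp
      qed
    qed
  qed
  have step: "(real \<kappa> + C) * E i \<ge> real \<kappa> * (\<rho> * \<chi> (Suc i) + \<Phi> (Suc i) - \<Phi> i)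
                 + C * (o1 (Suc i) - o1 i + o2 (Suc i) - o2 i)" if im: "i < m" for i
  proof -
    have pi: "p i < p (Suc i)" and qi: "q i < q (Suc i)" using inc[OF im] by auto
    have Ed: "E i = real \<kappa> * ((real (p (Suc i) div \<kappa>) - real (p i div \<kappa>))
                   + (real (q (Suc i) div \<kappa>) - real (q i div \<kappa>)))
                   + (o1 (Suc i) - o1 i + o2 (Suc i) - o2 i)"
    proof -
      have a: "real (p i) = real \<kappa> * real (p i div \<kappa>) + o1 i"
        unfolding o1_def by (rule real_divmod)
      have b: "real (p (Suc i)) = real \<kappa> * real (p (Suc i) div \<kappa>) + o1 (Suc i)"
        unfolding o1_def by (rule real_divmod)
      have c: "real (q i) = real \<kappa> * real (q i div \<kappa>) + o2 i"
        unfolding o2_def by (rule real_divmod)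
      have d: "real (q (Suc i)) = real \<kappa> * real (q (Suc i) div \<kappa>) + o2 (Suc i)"
        unfolding o2_def by (rule real_divmod)
      show ?thesis unfolding E_def using pi qi a b c d
        by (simp add: of_nat_diff algebra_simps)
    qed
    have bm1: "p i div \<kappa> \<le> p (Suc i) div \<kappa>" using pi by (simp add: div_le_mono)
    have bm2: "q i div \<kappa> \<le> q (Suc i) div \<kappa>" using qi by (simp add: div_le_mono)
    show ?thesis
    proof (cases "p i div \<kappa> = p (Suc i) div \<kappa> \<and> q i div \<kappa> = q (Suc i) div \<kappa>")
      case True
      have AA: "A (Suc i) = A i" and BB: "B (Suc i) = B i" using blkA[OF im] blkB[OF im] True by auto
      have Eo: "E i = o1 (Suc i) - o1 i + o2 (Suc i) - o2 i" using Ed True by simp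
      have li: "p i div A i mod k = q i div B i mod k" using let_[of i] im by simp
      have ls: "p (Suc i) div A i mod k = q (Suc i) div B i mod k"
        using let_[of "Suc i"] im AA BB by simp
      have lv: "A i > 0 \<and> B i > 0 \<and> (A i = B i \<or> R * A i \<le> B i \<or> R * B i \<le> A i)"
        using levs[of i] im by simp
      have loc: "E i \<ge> \<rho> * \<chi> (Suc i) + \<Phi> (Suc i) - \<Phi> i"
      proof (cases "A i = B i")
        case True
        then show ?thesis unfolding \<chi>_def \<Phi>_def E_def using AA BB by simp
      next
        case False
        then have ne: "R * A i \<le> B i \<or> R * B i \<le> A i" using lv by simp
        have AB: "A i < B i \<Longrightarrow> R * A i \<le> B i" using ne R0 ord_helper by blast
        have BA: "B i < A i \<Longrightarrow> R * B i \<le> A i" using ne R0 ord_helper[of R "B i" "A i"] by auto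
        show ?thesis
        proof (cases "A i < B i")
          case True
          have "E i \<ge> \<rho> + x * (real (q (Suc i) mod B i) - real (q i mod B i))
                - (real k - 1) * (real (p (Suc i) mod A i) - real (p i mod A i))"
            using local_step[OF k2 Rk _ AB[OF True] pi qi li ls] lv
            unfolding E_def \<rho>_def x_def by simp
          then show ?thesis using True AA BB False unfolding \<chi>_def \<Phi>_def
            by (simp add: algebra_simps)
        next
          case F2: False
          then have T2: "B i < A i" using False by simp
          have "E i \<ge> \<rho> + x * (real (p (Suc i) mod A i) - real (p i mod A i))
                - (real k - 1) * (real (q (Suc i) mod B i) - real (q i mod B i))"
            using local_step_sym[OF k2 Rk _ BA[OF T2] pi qi li ls] lv
            unfolding E_def \<rho>_def x_def by simp
          then show ?thesis using T2 F2 AA BB False unfolding \<chi>_def \<Phi>_def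
            by (simp add: algebra_simps)
        qed
      qed
      have h1: "real \<kappa> * E i \<ge> real \<kappa> * (\<rho> * \<chi> (Suc i) + \<Phi> (Suc i) - \<Phi> i)"
        using loc by (simp add: mult_left_mono)
      have h2: "C * E i = C * (o1 (Suc i) - o1 i + o2 (Suc i) - o2 i)" using Eo by simp
      show ?thesis unfolding distrib_right using h1 h2 by linarith
    next
      case False
      then have ch: "(real (p (Suc i) div \<kappa>) - real (p i div \<kappa>))
                   + (real (q (Suc i) div \<kappa>) - real (q i div \<kappa>)) \<ge> 1"
        using bm1 bm2 by auto
      have E0: "E i \<ge> 0" unfolding E_def by simp
      have "C \<ge> 0" unfolding C_def by simp
      have CE: "C * E i \<ge> C * real \<kappa> + C * (o1 (Suc i) - o1 i + o2 (Suc i) - o2 i)"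
      proof -
        have "C * E i = C * real \<kappa> * ((real (p (Suc i) div \<kappa>) - real (p i div \<kappa>))
                   + (real (q (Suc i) div \<kappa>) - real (q i div \<kappa>)))
              + C * (o1 (Suc i) - o1 i + o2 (Suc i) - o2 i)" unfolding Ed by (simp add: algebra_simps)
        moreover have "C * real \<kappa> * ((real (p (Suc i) div \<kappa>) - real (p i div \<kappa>))
                   + (real (q (Suc i) div \<kappa>) - real (q i div \<kappa>))) \<ge> C * real \<kappa> * 1"
          using ch \<open>C\<ge>0\<close> by (intro mult_left_mono) auto
        ultimately show ?thesis by simp
      qed
      have hb: "\<rho> * \<chi> (Suc i) + \<Phi> (Suc i) - \<Phi> i \<le> C"
      proof -
        have "\<rho> * \<chi> (Suc i) \<le> real k + 1" using \<rho>0 unfolding \<chi>_def by auto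
        moreover have "\<Phi> (Suc i) \<le> real T" "- \<Phi> i \<le> real T" using \<Phi>b[of i] \<Phi>b[of "Suc i"] im by auto
        ultimately show ?thesis unfolding C_def by simp
      qed
      have "real \<kappa> * (\<rho> * \<chi> (Suc i) + \<Phi> (Suc i) - \<Phi> i) \<le> real \<kappa> * C"
        using hb by (simp add: mult_left_mono)
      moreover have "real \<kappa> * E i \<ge> 0" using E0 by simp
      ultimately show ?thesis using CE by (simp add: algebra_simps)
    qed
  qed
  have sumstep: "(\<Sum>i<m. (real \<kappa> + C) * E i) \<ge> (\<Sum>i<m. real \<kappa> * (\<rho> * \<chi> (Suc i) + \<Phi> (Suc i) - \<Phi> i)
                 + C * (o1 (Suc i) - o1 i + o2 (Suc i) - o2 i))"
    by (rule sum_mono) (use step in auto)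
  have sE: "(\<Sum>i<m. E i) = real (p m - p 0) + real (q m - q 0)"
  proof -
    have mono0: "j \<le> m \<Longrightarrow> p 0 \<le> p j \<and> q 0 \<le> q j" for j
    proof (induction j)
      case 0 then show ?case by simp
    next
      case (Suc j) then show ?case using inc[of j] by fastforce
    qed
    have mono: "p 0 \<le> p m \<and> q 0 \<le> q m" using mono0 by simp
    have "(\<Sum>i<m. E i) = (\<Sum>i<m. (real (p (Suc i)) - real (p i)) + (real (q (Suc i)) - real (q i)))"
      by (rule sum.cong) (use inc in \<open>auto simp: E_def of_nat_diff less_imp_le\<close>)
    also have "\<dots> = (real (p m) - real (p 0)) + (real (q m) - real (q 0))"
      using sum_lessThan_telescope[of "\<lambda>i. real (p i)" m] sum_lessThan_telescope[of "\<lambda>i. real (q i)" m]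
      by (simp add: sum.distrib)
    finally show ?thesis using mono by (simp add: of_nat_diff)
  qed
  have s1: "(\<Sum>i<m. (real \<kappa> + C) * E i) = (real \<kappa> + C) * (real (p m - p 0) + real (q m - q 0))"
    by (subst sum_distrib_left[symmetric]) (simp add: sE)
  have s2: "(\<Sum>i<m. real \<kappa> * (\<rho> * \<chi> (Suc i) + \<Phi> (Suc i) - \<Phi> i)
                 + C * (o1 (Suc i) - o1 i + o2 (Suc i) - o2 i))
      = real \<kappa> * \<rho> * (\<Sum>i<m. \<chi> (Suc i)) + real \<kappa> * (\<Phi> m - \<Phi> 0)
        + C * ((o1 m - o1 0) + (o2 m - o2 0))"
  proof -
    have "(\<Sum>i<m. real \<kappa> * (\<rho> * \<chi> (Suc i) + \<Phi> (Suc i) - \<Phi> i)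
                 + C * (o1 (Suc i) - o1 i + o2 (Suc i) - o2 i))
      = (\<Sum>i<m. real \<kappa> * \<rho> * \<chi> (Suc i)) + real \<kappa> * (\<Sum>i<m. \<Phi> (Suc i) - \<Phi> i)
        + C * ((\<Sum>i<m. o1 (Suc i) - o1 i) + (\<Sum>i<m. o2 (Suc i) - o2 i))"
      by (simp add: sum.distrib sum_distrib_left algebra_simps sum_subtractf)
    then show ?thesis by (simp add: sum_lessThan_telescope sum_distrib_left mult.assoc)
  qed
  have chs: "(\<Sum>i<m. \<chi> (Suc i)) \<ge> real (card {i. i \<le> m \<and> A i \<noteq> B i}) - 1"
  proof -
    have "(\<Sum>i<Suc m. \<chi> i) = \<chi> 0 + (\<Sum>i<m. \<chi> (Suc i))" by (rule sum.lessThan_Suc_shift)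
    moreover have "(\<Sum>i<Suc m. \<chi> i) = real (card ({..<Suc m} \<inter> {i. A i \<noteq> B i}))"
      unfolding \<chi>_def by (rule sum_of_bool_eq; simp)
    moreover have "{..<Suc m} \<inter> {i. A i \<noteq> B i} = {i. i \<le> m \<and> A i \<noteq> B i}" by auto
    moreover have "\<chi> 0 \<le> 1" unfolding \<chi>_def by simp
    ultimately show ?thesis by simp
  qed
  have ph: "\<Phi> m - \<Phi> 0 \<ge> - 2 * real T" using \<Phi>b[of m] \<Phi>b[of 0] by auto
  have ob: "(o1 m - o1 0) + (o2 m - o2 0) \<ge> - 2 * (real \<kappa> - 1)"
  proof -
    have "p 0 mod \<kappa> + 1 \<le> \<kappa>" "q 0 mod \<kappa> + 1 \<le> \<kappa>" using \<kappa>0 by (auto simp: Suc_leI)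
    then have "real (p 0 mod \<kappa> + 1) \<le> real \<kappa>" "real (q 0 mod \<kappa> + 1) \<le> real \<kappa>"
      by (simp_all only: of_nat_le_iff)
    then have "o1 0 \<le> real \<kappa> - 1" "o2 0 \<le> real \<kappa> - 1" unfolding o1_def o2_def
      by simp_all
    moreover have "o1 m \<ge> 0" "o2 m \<ge> 0" unfolding o1_def o2_def by simp_all
    ultimately show ?thesis by simp
  qed
  have C0: "C \<ge> 0" unfolding C_def by simp
  have "real \<kappa> * \<rho> * (\<Sum>i<m. \<chi> (Suc i)) \<ge> real \<kappa> * \<rho> * (real (card {i. i \<le> m \<and> A i \<noteq> B i}) - 1)"
    using chs \<rho>0 by (intro mult_left_mono) auto
  moreover have "real \<kappa> * (\<Phi> m - \<Phi> 0) \<ge> real \<kappa> * (- 2 * real T)" using ph by (intro mult_left_mono) auto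
  moreover have "C * ((o1 m - o1 0) + (o2 m - o2 0)) \<ge> C * (- 2 * (real \<kappa> - 1))"
    using ob C0 by (intro mult_left_mono) auto
  ultimately have "(real \<kappa> + C) * (real (p m - p 0) + real (q m - q 0))
     \<ge> real \<kappa> * \<rho> * (real (card {i. i \<le> m \<and> A i \<noteq> B i}) - 1) - 2 * real \<kappa> * real T
        - 2 * C * (real \<kappa> - 1)"
    using sumstep s1 s2 by (simp add: algebra_simps)
  then show ?thesis unfolding C_def \<rho>_def x_def by (simp add: algebra_simps)
qed




lemma LCS_set_finite: "finite {length (nths u1 I1) | I1 I2. is_common_subseq u1 u2 I1 I2}"
proof -
  have "{length (nths u1 I1) | I1 I2. is_common_subseq u1 u2 I1 I2} \<subseteq> {..length u1}"
  proof
    fix x assume "x \<in> {length (nths u1 I1) | I1 I2. is_common_subseq u1 u2 I1 I2}"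
    then obtain I1 where "x = length (nths u1 I1)" by blast
    then have "x \<le> length [0..<length u1]" unfolding nths_conv using length_filter_le[of _ "[0..<length u1]"] by simp
    then show "x \<in> {..length u1}" by simp
  qed
  then show ?thesis using finite_subset by blast
qed

lemma LCS_ge:
  assumes "is_common_subseq u1 u2 I1 I2"
  shows "length (nths u1 I1) \<le> LCS u1 u2"
  unfolding LCS_def using assms LCS_set_finite by (intro Max_ge) auto

lemma LCS_attained:
  "\<exists>I1 I2. is_common_subseq u1 u2 I1 I2 \<and> length (nths u1 I1) = LCS u1 u2"
proof -
  have ne: "{length (nths u1 I1) | I1 I2. is_common_subseq u1 u2 I1 I2} \<noteq> {}"
    using is_common_subseq_def is_subseq_pos_def by fastforce
  show ?thesis using Max_in[OF LCS_set_finite ne] unfolding LCS_def by auto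
qed

lemma nths_take_bound:
  assumes "I \<subseteq> {..<length (take n xs)}"
  shows "nths (take n xs) I = nths xs I"
proof -
  have "nths xs I = nths (take n xs @ drop n xs) I" by simp
  also have "\<dots> = nths (take n xs) I @ nths (drop n xs) {j. j + length (take n xs) \<in> I}"
    by (rule nths_append)
  also have "{j. j + length (take n xs) \<in> I} = {}" using assms by auto
  finally show ?thesis by simp
qed

lemma nths_extra:
  assumes "\<forall>j\<in>J. j \<ge> length xs"
  shows "nths xs (I \<union> J) = nths xs I"
  unfolding nths_conv using assms by (intro arg_cong[where f="map _"] filter_cong) auto

lemma LCS_mono:
  assumes "x \<le> x'" "y \<le> y'"
  shows "LCS (take x w1) (take y w2) \<le> LCS (take x' w1) (take y' w2)"
proof -
  obtain I1 I2 where c: "is_common_subseq (take x w1) (take y w2) I1 I2"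
    and l: "length (nths (take x w1) I1) = LCS (take x w1) (take y w2)"
    using LCS_attained by blast
  have s1: "I1 \<subseteq> {..<length (take x w1)}" "I2 \<subseteq> {..<length (take y w2)}"
    using c unfolding is_common_subseq_def is_subseq_pos_def by auto
  have s1': "I1 \<subseteq> {..<length (take x' w1)}" "I2 \<subseteq> {..<length (take y' w2)}"
    using s1 assms by auto
  have e1: "nths (take x' w1) I1 = nths (take x w1) I1"
    using nths_take_bound[OF s1(1)] nths_take_bound[OF s1'(1)] by simp
  have e2: "nths (take y' w2) I2 = nths (take y w2) I2"
    using nths_take_bound[OF s1(2)] nths_take_bound[OF s1'(2)] by simp
  have "is_common_subseq (take x' w1) (take y' w2) I1 I2"
    using c s1' e1 e2 unfolding is_common_subseq_def is_subseq_pos_def by auto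
  then show ?thesis using LCS_ge l e1 by fastforce
qed

lemma LCS_step:
  assumes "x < length w1" "y < length w2" "w1 ! x = w2 ! y"
  shows "LCS (take x w1) (take y w2) + 1 \<le> LCS (take (Suc x) w1) (take (Suc y) w2)"
proof -
  obtain I1 I2 where c: "is_common_subseq (take x w1) (take y w2) I1 I2"
    and l: "length (nths (take x w1) I1) = LCS (take x w1) (take y w2)"
    using LCS_attained by blast
  have s1: "I1 \<subseteq> {..<x}" "I2 \<subseteq> {..<y}"
    using c assms unfolding is_common_subseq_def is_subseq_pos_def by auto
  have t1: "take (Suc x) w1 = take x w1 @ [w1 ! x]" using assms by (simp add: take_Suc_conv_app_nth)
  have t2: "take (Suc y) w2 = take y w2 @ [w2 ! y]" using assms by (simp add: take_Suc_conv_app_nth)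
  have lx: "length (take x w1) = x" "length (take y w2) = y" using assms by auto
  have n1: "nths (take (Suc x) w1) (I1 \<union> {x}) = nths (take x w1) I1 @ [w1 ! x]"
  proof -
    have "nths (take (Suc x) w1) (I1 \<union> {x}) = nths (take x w1) (I1 \<union> {x}) @ nths [w1!x] {j. j + x \<in> I1 \<union> {x}}"
      using t1 lx nths_append by metis
    moreover have "nths (take x w1) (I1 \<union> {x}) = nths (take x w1) I1" using lx by (intro nths_extra) auto
    moreover have "nths [w1!x] {j. j + x \<in> I1 \<union> {x}} = [w1 ! x]" by simp
    ultimately show ?thesis by simp
  qed
  have n2: "nths (take (Suc y) w2) (I2 \<union> {y}) = nths (take y w2) I2 @ [w2 ! y]"
  proof -
    have "nths (take (Suc y) w2) (I2 \<union> {y}) = nths (take y w2) (I2 \<union> {y}) @ nths [w2!y] {j. j + y \<in> I2 \<union> {y}}"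
      using t2 lx nths_append by metis
    moreover have "nths (take y w2) (I2 \<union> {y}) = nths (take y w2) I2" using lx by (intro nths_extra) auto
    moreover have "nths [w2!y] {j. j + y \<in> I2 \<union> {y}} = [w2 ! y]" by simp
    ultimately show ?thesis by simp
  qed
  have "is_common_subseq (take (Suc x) w1) (take (Suc y) w2) (I1 \<union> {x}) (I2 \<union> {y})"
    using c s1 n1 n2 assms unfolding is_common_subseq_def is_subseq_pos_def by auto
  from LCS_ge[OF this] show ?thesis using n1 l by simp
qed

lemma LCS_le_full: "LCS (take x w1) (take y w2) \<le> LCS w1 w2"
  using LCS_mono[of x "max x (length w1)" y "max y (length w2)" w1 w2] by simp

lemma same_count:
  fixes n \<kappa> :: nat and b1 b2 :: "nat \<Rightarrow> nat" and same :: "nat \<Rightarrow> bool"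
  assumes mono: "\<And>i j. i \<le> j \<Longrightarrow> j < n \<Longrightarrow> b1 i \<le> b1 j \<and> b2 i \<le> b2 j"
    and sm: "\<And>i. i < n \<Longrightarrow> same i \<Longrightarrow> w1 ! (b1 i) = w2 ! (b2 i)"
    and bl: "\<And>i. i < n \<Longrightarrow> b1 i < length w1 \<and> b2 i < length w2"
    and c1: "\<And>c. card {i. i < n \<and> b1 i = c} \<le> \<kappa>"
    and c2: "\<And>c. card {i. i < n \<and> b2 i = c} \<le> \<kappa>"
  shows "card {i. i < n \<and> same i} \<le> 2 * \<kappa> * LCS w1 w2"
proof -
  define r where "r i = LCS (take (b1 i) w1) (take (b2 i) w2)" for i
  define S where "S t = {i. i < n \<and> same i \<and> r i = t}" for t
  have rl: "r i < LCS w1 w2" if "i < n" "same i" for i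
  proof -
    have "r i + 1 \<le> LCS (take (Suc (b1 i)) w1) (take (Suc (b2 i)) w2)"
      unfolding r_def using LCS_step bl sm that by blast
    then show ?thesis using LCS_le_full[of "Suc (b1 i)" w1 "Suc (b2 i)" w2] by simp
  qed
  have U: "{i. i < n \<and> same i} = (\<Union>t\<in>{..<LCS w1 w2}. S t)"
    unfolding S_def using rl by auto
  have cS: "card (S t) \<le> 2 * \<kappa>" for t
  proof (cases "S t = {}")
    case True then show ?thesis by simp
  next
    case False
    have fin: "finite (S t)" unfolding S_def by simp
    define i0 where "i0 = Min (S t)"
    have i0S: "i0 \<in> S t" unfolding i0_def using fin False by simp
    have sub: "S t \<subseteq> {i. i < n \<and> b1 i = b1 i0} \<union> {i. i < n \<and> b2 i = b2 i0}"
    proof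
      fix i assume iS: "i \<in> S t"
      have le: "i0 \<le> i" unfolding i0_def using fin iS by simp
      have "i < n" using iS unfolding S_def by simp
      then have m: "b1 i0 \<le> b1 i" "b2 i0 \<le> b2 i" using mono le by auto
      show "i \<in> {i. i < n \<and> b1 i = b1 i0} \<union> {i. i < n \<and> b2 i = b2 i0}"
      proof (rule ccontr)
        assume "\<not> ?thesis"
        then have "Suc (b1 i0) \<le> b1 i" "Suc (b2 i0) \<le> b2 i" using m \<open>i<n\<close> by auto
        then have "LCS (take (Suc (b1 i0)) w1) (take (Suc (b2 i0)) w2) \<le> r i"
          unfolding r_def by (rule LCS_mono)
        moreover have "r i0 + 1 \<le> LCS (take (Suc (b1 i0)) w1) (take (Suc (b2 i0)) w2)"
          unfolding r_def using LCS_step bl sm i0S unfolding S_def by blast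
        moreover have "r i = t" "r i0 = t" using iS i0S unfolding S_def by auto
        ultimately show False by simp
      qed
    qed
    have "card (S t) \<le> card ({i. i < n \<and> b1 i = b1 i0} \<union> {i. i < n \<and> b2 i = b2 i0})"
      by (rule card_mono[OF _ sub]) auto
    also have "\<dots> \<le> card {i. i < n \<and> b1 i = b1 i0} + card {i. i < n \<and> b2 i = b2 i0}"
      by (rule card_Un_le)
    also have "\<dots> \<le> 2 * \<kappa>" using c1 c2 by (simp add: add_mono mult_2)
    finally show ?thesis .
  qed
  have "card {i. i < n \<and> same i} \<le> (\<Sum>t<LCS w1 w2. card (S t))"
    unfolding U by (rule card_UN_le) simp
  also have "\<dots> \<le> (\<Sum>t<LCS w1 w2. 2 * \<kappa>)" by (rule sum_mono) (rule cS)
  finally show ?thesis by (simp add: mult.commute)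
qed




lemma sorted_span:
  assumes "sorted_wrt (<) P" "length P = Suc m"
  shows "span_pos (set P) = P ! m - P ! 0 + 1"
proof -
  have fin: "finite (set P)" by simp
  have ne: "set P \<noteq> {}" using assms by auto
  have le: "P ! i \<le> P ! j" if "i \<le> j" "j \<le> m" for i j
    using assms that sorted_wrt_nth_less[OF assms(1)] by (cases "i = j") (auto simp: less_imp_le)
  have mx: "Max (set P) = P ! m"
  proof (rule Max_eqI[OF fin])
    fix y assume "y \<in> set P"
    then obtain j where "j < length P" "P ! j = y" by (auto simp: in_set_conv_nth)
    then show "y \<le> P ! m" using le[of j m] assms by auto
  qed (use assms in auto)
  have mn: "Min (set P) = P ! 0"
  proof (rule Min_eqI[OF fin])
    fix y assume "y \<in> set P"
    then obtain j where "j < length P" "P ! j = y" by (auto simp: in_set_conv_nth)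
    then show "P ! 0 \<le> y" using le[of 0 j] assms by auto
  qed (use assms in auto)
  show ?thesis unfolding span_pos_def using ne mx mn by simp
qed

lemma card_block:
  fixes p :: "nat \<Rightarrow> nat"
  assumes inc: "\<And>i j. i < j \<Longrightarrow> j < n \<Longrightarrow> p i < p j" and k0: "\<kappa> > 0"
  shows "card {i. i < n \<and> p i div \<kappa> = c} \<le> \<kappa>"
proof -
  have inj: "inj_on p {i. i < n \<and> p i div \<kappa> = c}"
  proof (rule inj_onI)
    fix i j assume "i \<in> {i. i < n \<and> p i div \<kappa> = c}" "j \<in> {i. i < n \<and> p i div \<kappa> = c}" "p i = p j"
    then show "i = j" using inc by (metis linorder_neqE_nat mem_Collect_eq less_irrefl)
  qed
  have "p ` {i. i < n \<and> p i div \<kappa> = c} \<subseteq> {c*\<kappa>..<c*\<kappa>+\<kappa>}"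
  proof
    fix y assume "y \<in> p ` {i. i < n \<and> p i div \<kappa> = c}"
    then have "y div \<kappa> = c" by auto
    moreover have "y div \<kappa> * \<kappa> + y mod \<kappa> = y" by (rule div_mult_mod_eq)
    moreover have "y mod \<kappa> < \<kappa>" using k0 by simp
    ultimately show "y \<in> {c*\<kappa>..<c*\<kappa>+\<kappa>}" by auto
  qed
  then have "card (p ` {i. i < n \<and> p i div \<kappa> = c}) \<le> \<kappa>"
    using card_mono[of "{c*\<kappa>..<c*\<kappa>+\<kappa>}"] by fastforce
  then show ?thesis using card_image[OF inj] by simp
qed




theorem lemma3p5:
  fixes k K R L :: nat and w1 w2 :: "nat list" and I1 I2 :: "nat set"
  assumes "k \<ge> 2" and "K \<ge> 1" and "R \<ge> k" and "L > 0" and "R ^ (K - 1) dvd L"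
    and "set w1 \<subseteq> {1..K}" and "set w2 \<subseteq> {1..K}"
    and "is_common_subseq (hat k L R w1) (hat k L R w2) I1 I2"
  shows "real (cs_span I1 I2) \<ge>
      (real k + 1 - real k / real R - 8 * real R ^ (K - 1) / real L) * real (cs_len (hat k L R w1) I1)
      - 2 * real L * real k * (real k + 1) * real (LCS w1 w2) - 16 * real R ^ (K - 1)"
proof -
  note k2 = assms(1) and Rk = assms(3) and L0 = assms(4) and dv = assms(5)
  define u1 where "u1 = hat k L R w1"
  define u2 where "u2 = hat k L R w2"
  define \<kappa> where "\<kappa> = k * L"
  define T where "T = R ^ (K - 1)"
  have R0: "R > 0" using k2 Rk by simp
  have \<kappa>0: "\<kappa> > 0" unfolding \<kappa>_def using k2 L0 by simp
  have rT: "real R ^ (K - 1) = real T" unfolding T_def by simp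
  have T1: "T \<ge> 1" unfolding T_def using R0 by simp
  define P1 where "P1 = filter (\<lambda>i. i \<in> I1) [0..<length u1]"
  define P2 where "P2 = filter (\<lambda>i. i \<in> I2) [0..<length u2]"
  have cs: "is_common_subseq u1 u2 I1 I2" using assms(8) unfolding u1_def u2_def .
  have I1s: "I1 \<subseteq> {..<length u1}" and I2s: "I2 \<subseteq> {..<length u2}"
    using cs unfolding is_common_subseq_def is_subseq_pos_def by auto
  have eq: "map ((!) u1) P1 = map ((!) u2) P2"
    using cs unfolding is_common_subseq_def P1_def P2_def by (simp add: nths_conv)
  have lenP: "length P1 = length P2" using arg_cong[OF eq, of length] by simp
  have setP1: "set P1 = I1" unfolding P1_def using I1s by auto
  have setP2: "set P2 = I2" unfolding P2_def using I2s by auto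
  have sw1: "sorted_wrt (<) P1" unfolding P1_def by (simp add: sorted_wrt_filter)
  have sw2: "sorted_wrt (<) P2" unfolding P2_def by (simp add: sorted_wrt_filter)
  have lu1: "length u1 = \<kappa> * length w1" unfolding u1_def \<kappa>_def using hat_length R0 dv assms(6) by blast
  have lu2: "length u2 = \<kappa> * length w2" unfolding u2_def \<kappa>_def using hat_length R0 dv assms(7) by blast
  have cslen: "cs_len (hat k L R w1) I1 = length P1"
    unfolding cs_len_def u1_def[symmetric] P1_def by (simp add: nths_conv)
  have coef: "real k + 1 - real k / real R - 8 * real T / real L \<le> real k + 1"
  proof -
    have "0 \<le> real k / real R" "0 \<le> 8 * real T / real L" by simp_all
    then show ?thesis by linarith
  qed
  show ?thesis
  proof (cases "length P1")
    case 0
    then have "I1 = {}" "I2 = {}" using setP1 setP2 lenP by auto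
    then have cs0: "real (cs_span I1 I2) = 0" unfolding cs_span_def span_pos_def by simp
    have "(real k + 1 - real k / real R - 8 * real R ^ (K - 1) / real L) * real (cs_len (hat k L R w1) I1) = 0"
      using 0 cslen by simp
    moreover have "0 \<le> 2 * real L * real k * (real k + 1) * real (LCS w1 w2)" by simp
    moreover have "0 \<le> 16 * real R ^ (K - 1)" by simp
    ultimately show ?thesis using cs0 by linarith
  next
    case (Suc m)
    define p where "p i = P1 ! i" for i
    define q where "q i = P2 ! i" for i
    define A where "A i = lev k L R w1 (p i)" for i
    define B where "B i = lev k L R w2 (q i)" for i
    have pin: "p i < \<kappa> * length w1" if "i \<le> m" for i
    proof -
      have "p i \<in> set P1" unfolding p_def using that Suc by simp
      then show ?thesis using setP1 I1s lu1 by auto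
    qed
    have qin: "q i < \<kappa> * length w2" if "i \<le> m" for i
    proof -
      have "q i \<in> set P2" unfolding q_def using that Suc lenP by simp
      then show ?thesis using setP2 I2s lu2 by auto
    qed
    have pinc: "p i < p j" if "i < j" "j \<le> m" for i j
      unfolding p_def using sorted_wrt_nth_less[OF sw1] that Suc by simp
    have qinc: "q i < q j" if "i < j" "j \<le> m" for i j
      unfolding q_def using sorted_wrt_nth_less[OF sw2] that Suc lenP by simp
    have letters: "u1 ! p i = u2 ! q i" if "i \<le> m" for i
    proof -
      have "map ((!) u1) P1 ! i = map ((!) u2) P2 ! i" using eq by simp
      then show ?thesis unfolding p_def q_def using that Suc lenP by simp
    qed
    have let_: "p i div A i mod k = q i div B i mod k" if "i \<le> m" for i
    proof -
      have "u1 ! p i = p i div A i mod k + 1" unfolding u1_def A_def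
        using hat_nth[OF R0 dv assms(6)] pin[OF that] unfolding \<kappa>_def by simp
      moreover have "u2 ! q i = q i div B i mod k + 1" unfolding u2_def B_def
        using hat_nth[OF R0 dv assms(7)] qin[OF that] unfolding \<kappa>_def by simp
      ultimately show ?thesis using letters[OF that] by simp
    qed
    have levs: "A i > 0 \<and> B i > 0 \<and> A i \<le> T \<and> B i \<le> T
                 \<and> (A i = B i \<or> R * A i \<le> B i \<or> R * B i \<le> A i)" if "i \<le> m" for i
    proof -
      note la = lev_dvd[OF R0 dv assms(6), of "p i"] and lb = lev_dvd[OF R0 dv assms(7), of "q i"]
      have p1: "p i < k*L*length w1" "q i < k*L*length w2"
        using pin[OF that] qin[OF that] unfolding \<kappa>_def by auto
      have ord: "A i = B i \<or> R * A i \<le> B i \<or> R * B i \<le> A i"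
      proof -
        define a where "a = w1 ! (p i div (k*L)) - 1"
        define b where "b = w2 ! (q i div (k*L)) - 1"
        have Aa: "A i = R ^ a" unfolding A_def lev_def a_def by simp
        have Bb: "B i = R ^ b" unfolding B_def lev_def b_def by simp
        show ?thesis
        proof (cases a b rule: linorder_cases)
          case less
          then have "R ^ Suc a \<le> R ^ b" using R0 by (intro power_increasing) auto
          then have "R * R ^ a \<le> R ^ b" by simp
          then show ?thesis using Aa Bb by simp
        next
          case greater
          then have "R ^ Suc b \<le> R ^ a" using R0 by (intro power_increasing) auto
          then have "R * R ^ b \<le> R ^ a" by simp
          then show ?thesis using Aa Bb by simp
        qed (simp add: Aa Bb)
      qed
      show ?thesis using la(2,3) lb(2,3) p1 ord unfolding A_def B_def T_def by simp
    qed
    have blkA: "A (Suc i) = A i" if "i < m" "p i div \<kappa> = p (Suc i) div \<kappa>" for i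
      using that unfolding A_def lev_def \<kappa>_def by simp
    have blkB: "B (Suc i) = B i" if "i < m" "q i div \<kappa> = q (Suc i) div \<kappa>" for i
      using that unfolding B_def lev_def \<kappa>_def by simp
    have MA: "(real \<kappa> + real k + 1 + 2 * real T) *
           (real (p m - p 0) + real (q m - q 0))
         \<ge> real \<kappa> * (real k + 1 - real k / real R) * (real (card {i. i \<le> m \<and> A i \<noteq> B i}) - 1)
           - 2 * real \<kappa> * real T - 2 * (real k + 1 + 2 * real T) * (real \<kappa> - 1)"
      by (rule main_abstract[OF k2 Rk \<kappa>0]) (use pinc qinc let_ blkA blkB levs in auto)
    have same: "card {i. i < Suc m \<and> A i = B i} \<le> 2 * \<kappa> * LCS w1 w2"
    proof (rule same_count)
      fix i j assume "i \<le> j" "j < Suc m"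
      then have "p i \<le> p j \<and> q i \<le> q j" using pinc qinc by (cases "i = j") (auto simp: less_imp_le)
      then show "p i div \<kappa> \<le> p j div \<kappa> \<and> q i div \<kappa> \<le> q j div \<kappa>" by (simp add: div_le_mono)
    next
      fix i assume i: "i < Suc m" "A i = B i"
      then have "R ^ (w1 ! (p i div \<kappa>) - 1) = R ^ (w2 ! (q i div \<kappa>) - 1)"
        unfolding A_def B_def lev_def \<kappa>_def by simp
      then have "w1 ! (p i div \<kappa>) - 1 = w2 ! (q i div \<kappa>) - 1"
        using k2 Rk by (simp add: power_inject_exp)
      moreover have "w1 ! (p i div \<kappa>) \<in> {1..K}" "w2 ! (q i div \<kappa>) \<in> {1..K}"
        using lev_dvd(4)[OF R0 dv assms(6), of "p i"] lev_dvd(4)[OF R0 dv assms(7), of "q i"]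
          pin qin i unfolding \<kappa>_def by auto
      ultimately show "w1 ! (p i div \<kappa>) = w2 ! (q i div \<kappa>)" by auto
    next
      fix i assume "i < Suc m"
      then show "p i div \<kappa> < length w1 \<and> q i div \<kappa> < length w2"
        using pin qin \<kappa>0 by (auto simp: div_less_iff_less_mult mult.commute)
    next
      fix c show "card {i. i < Suc m \<and> p i div \<kappa> = c} \<le> \<kappa>"
        by (rule card_block[OF _ \<kappa>0]) (use pinc in auto)
    next
      fix c show "card {i. i < Suc m \<and> q i div \<kappa> = c} \<le> \<kappa>"
        by (rule card_block[OF _ \<kappa>0]) (use qinc in auto)
    qed
    define nc where "nc = card {i. i \<le> m \<and> A i \<noteq> B i}"
    define ns where "ns = card {i. i < Suc m \<and> A i = B i}"
    have ncs: "nc + ns = Suc m"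
    proof -
      have "{..<Suc m} = {i. i \<le> m \<and> A i \<noteq> B i} \<union> {i. i < Suc m \<and> A i = B i}" by auto
      then have "card {..<Suc m} = nc + ns" unfolding nc_def ns_def
        by (subst card_Un_disjoint[symmetric]) auto
      then show ?thesis by simp
    qed
    have span: "cs_span I1 I2 = (p m - p 0 + 1) + (q m - q 0 + 1)"
      unfolding cs_span_def p_def q_def using sorted_span[OF sw1 Suc] sorted_span[OF sw2] Suc lenP setP1 setP2
      by simp
    define S' where "S' = real (p m - p 0) + real (q m - q 0)"
    have S'0: "S' \<ge> 0" unfolding S'_def by simp
    have Sr: "real (cs_span I1 I2) = S' + 2" unfolding span S'_def by simp
    define \<rho> where "\<rho> = real k + 1 - real k / real R"
    define \<epsilon> where "\<epsilon> = 8 * real T / real L"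
    have \<rho>0: "0 \<le> \<rho>" "\<rho> \<le> real k + 1"
    proof -
      have "real k / real R \<le> 1" using Rk R0 by (simp add: divide_le_eq)
      moreover have "0 \<le> real k / real R" by simp
      ultimately show "0 \<le> \<rho>" "\<rho> \<le> real k + 1" unfolding \<rho>_def by linarith+
    qed
    have \<epsilon>0: "\<epsilon> \<ge> 0" unfolding \<epsilon>_def by simp
    have nspart: "(\<rho> - \<epsilon>) * real ns \<le> 2 * real L * real k * (real k + 1) * real (LCS w1 w2)"
    proof -
      have "(\<rho> - \<epsilon>) * real ns \<le> (real k + 1) * real ns" using \<rho>0 \<epsilon>0 by (intro mult_right_mono) auto
      also have "\<dots> \<le> (real k + 1) * real (2 * \<kappa> * LCS w1 w2)"
      proof -
        have "real ns \<le> real (2 * \<kappa> * LCS w1 w2)" using same unfolding ns_def by (simp only: of_nat_le_iff)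
        then show ?thesis by (intro mult_left_mono) auto
      qed
      finally show ?thesis unfolding \<kappa>_def by (simp add: algebra_simps)
    qed
    have ncpart: "(\<rho> - \<epsilon>) * real nc - 16 * real T \<le> S'"
    proof (cases "nc = 0")
      case True then show ?thesis using S'0 by simp
    next
      case False
      then have "{i. i \<le> m \<and> A i \<noteq> B i} \<noteq> {}" unfolding nc_def by (metis card.empty)
      then obtain i where i: "i \<le> m" "A i \<noteq> B i" by blast
      have kT: "k \<le> T"
      proof -
        have "A i > 0" "B i > 0" "A i \<le> T" "B i \<le> T" "R * A i \<le> B i \<or> R * B i \<le> A i"
          using levs[OF i(1)] i(2) by auto
        moreover have "R \<le> R * A i" "R \<le> R * B i" using \<open>A i > 0\<close> \<open>B i > 0\<close> by simp_all
        ultimately have "R \<le> T" by linarith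
        then show ?thesis using Rk by simp
      qed
      have kTr: "real k \<le> real T" "2 \<le> real k" using kT k2 by auto
      define C where "C = real k + 1 + 2 * real T"
      define D where "D = real \<kappa> + C"
      have D0: "D > 0" unfolding D_def C_def by simp
      have MA': "D * S' \<ge> real \<kappa> * \<rho> * (real nc - 1) - 2 * real \<kappa> * real T - 2 * C * (real \<kappa> - 1)"
        using MA unfolding D_def C_def S'_def \<rho>_def nc_def by (simp add: algebra_simps)
      have key1: "C * \<rho> \<le> D * \<epsilon>"
      proof -
        have "C * \<rho> \<le> C * (real k + 1)" using \<rho>0 unfolding C_def by (intro mult_left_mono) auto
        also have "\<dots> \<le> 8 * real k * real T"
        proof -
          have a: "real k * real k \<le> real k * real T" using kTr by (intro mult_left_mono) auto
          have b0: "2 * real k \<le> real T * real k" using kTr by (intro mult_right_mono) auto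
          then have b: "2 * real k \<le> real k * real T" by (simp add: mult.commute)
          have c: "2 * real T \<le> real k * real T" using kTr by (intro mult_right_mono) auto
          have d: "1 \<le> real k * real T" using b kTr by linarith
          show ?thesis unfolding C_def using a b c d by (simp add: algebra_simps)
        qed
        also have "\<dots> = real \<kappa> * \<epsilon>" unfolding \<epsilon>_def \<kappa>_def using L0 by simp
        also have "\<dots> \<le> D * \<epsilon>" unfolding D_def C_def using \<epsilon>0 by (intro mult_right_mono) auto
        finally show ?thesis .
      qed
      have key2: "real \<kappa> * \<rho> + 2 * real \<kappa> * real T + 2 * C * (real \<kappa> - 1) \<le> 16 * real T * D"
      proof -
        have "real \<kappa> * \<rho> \<le> real \<kappa> * (2 * real T)" using \<rho>0 kTr T1 by (intro mult_left_mono) auto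
        moreover have "2 * C * (real \<kappa> - 1) \<le> 2 * (4 * real T) * real \<kappa>"
        proof -
          have "C \<le> 4 * real T" unfolding C_def using kTr T1 by simp
          moreover have "real \<kappa> - 1 \<le> real \<kappa>" by simp
          moreover have "C \<ge> 0" unfolding C_def by simp
          ultimately show ?thesis using \<kappa>0 by (simp add: mult_mono)
        qed
        moreover have "16 * real T * real \<kappa> \<le> 16 * real T * D" unfolding D_def C_def
          by (intro mult_left_mono) auto
        moreover have "0 \<le> D * real T" using D0 by simp
        ultimately show ?thesis by (simp add: algebra_simps)
      qed
      have "D * ((\<rho> - \<epsilon>) * real nc - 16 * real T) = (real \<kappa> * \<rho> - (D * \<epsilon> - C * \<rho>)) * real nc - 16 * real T * D"
        unfolding D_def by (simp add: algebra_simps)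
      also have "\<dots> \<le> real \<kappa> * \<rho> * real nc - 16 * real T * D"
      proof -
        have "0 \<le> (D * \<epsilon> - C * \<rho>) * real nc" using key1 by simp
        moreover have "(real \<kappa> * \<rho> - (D * \<epsilon> - C * \<rho>)) * real nc
          = real \<kappa> * \<rho> * real nc - (D * \<epsilon> - C * \<rho>) * real nc" by (simp add: left_diff_distrib)
        ultimately show ?thesis by linarith
      qed
      also have "\<dots> \<le> D * S'" using MA' key2 by (simp add: algebra_simps)
      finally show ?thesis using D0 by simp
    qed
    have cl: "real (cs_len (hat k L R w1) I1) = real nc + real ns" using cslen Suc ncs
      by (metis of_nat_add)
    have ce: "real k + 1 - real k / real R - 8 * real R ^ (K - 1) / real L = \<rho> - \<epsilon>"
      unfolding \<rho>_def \<epsilon>_def rT by simp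
    have dd: "(\<rho> - \<epsilon>) * (real nc + real ns) = (\<rho> - \<epsilon>) * real nc + (\<rho> - \<epsilon>) * real ns"
      by (simp add: distrib_left)
    show ?thesis unfolding ce cl Sr using ncpart nspart rT dd by linarith
  qed
qed


end
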